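(* Let $S=(d,N_1,\dots,N_L)$ be a neural network architecture, let $C>0$, let $\Omega\subset\mathbb{R}^d$ be Borel measurable and bounded, and let $\varrho(x)=\max\{0,x\}$ be the ReLU. Then the set $\mathcal{RNN}_\varrho^{\Omega,C}(S)=\{\mathrm{R}_\varrho^\Omega(\Phi):\Phi\in\mathcal{NN}(S),\ \|\Phi\|_{\mathrm{scaling}}\le C\}$ is closed in $L^p(\mu;\mathbb{R}^{N_L})$ for every $p\in[1,\infty]$ and every finite Borel measure $\mu$ on $\Omega$. If $\Omega$ is compact, then $\mathcal{RNN}_\varrho^{\Omega,C}(S)$ is also closed in $C(\Omega;\mathbb{R}^{N_L})$.
   Context: A neural network with architecture $S=(N_0,\dots,N_L)$ ($N_0=d$) is a family $\Phi=((A_\ell,b_\ell))_{\ell=1}^L$, $A_\ell\in\mathbb{R}^{N_\ell\times N_{\ell-1}}$, $b_\ell\in\mathbb{R}^{N_\ell}$; $\mathcal{NN}(S)$ is the set of these; $\|\Phi\|_{\mathrm{scaling}}=\max_\ell\|A_\ell\|_{\max}$, where $\|\cdot\|_{\max}$ is the maximal absolute entry (no bound is imposed on the biases $b_\ell$). $\mathrm{R}_\varrho^\Omega(\Phi):\Omega\to\mathbb{R}^{N_L}$, $x\mapsto x_L$, where $x_0=x$, $x_\ell=\varrho(A_\ell x_{\ell-1}+b_\ell)$ for $1\le\ell\le L-1$ (componentwise), $x_L=A_Lx_{L-1}+b_L$. The norms are $\|f\|_{L^p(\mu;\mathbb{R}^{N_L})}=\|\,|f|\,\|_{L^p(\mu)}$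 and $\|f\|_{\sup}=\sup_x|f(x)|$ with $|\cdot|$ the Euclidean norm. *)

theory Defs
  imports "HOL-Analysis.Analysis" "HOL-Probability.Essential_Supremum"
begin

definition enc :: "'n::finite \<Rightarrow> nat" where
  "enc = (SOME e. bij_betw e (UNIV::'n set) {..<CARD('n)})"

definition dec :: "nat \<Rightarrow> 'n::finite" where
  "dec = inv_into UNIV enc"

text \<open>A layer (A,b): A is the N_l x N_(l-1) matrix, b the bias vector,
  stored as functions on indices, zero outside the matrix/vector range.\<close>
type_synonym layer = "(nat \<Rightarrow> nat \<Rightarrow> real) \<times> (nat \<Rightarrow> real)"

definition is_NN :: "nat list \<Rightarrow> layer list \<Rightarrow> bool" where
  "is_NN S \<Phi> \<longleftrightarrow> length S = length \<Phi> + 1 \<and>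
     (\<forall>l < length \<Phi>.
        (\<forall>i j. (S ! (l+1) \<le> i \<or> S ! l \<le> j) \<longrightarrow> fst (\<Phi> ! l) i j = 0) \<and>
        (\<forall>i. S ! (l+1) \<le> i \<longrightarrow> snd (\<Phi> ! l) i = 0))"

definition scaling_norm :: "nat list \<Rightarrow> layer list \<Rightarrow> real" where
  "scaling_norm S \<Phi> = Max (\<Union>l<length \<Phi>.
      {\<bar>fst (\<Phi> ! l) i j\<bar> | i j. i < S ! (l+1) \<and> j < S ! l})"

definition aff :: "nat \<Rightarrow> layer \<Rightarrow> (nat \<Rightarrow> real) \<Rightarrow> nat \<Rightarrow> real" where
  "aff n l x = (\<lambda>i. (\<Sum>j<n. fst l i j * x j) + snd l i)"

fun eval_net :: "(real \<Rightarrow> real) \<Rightarrow> nat list \<Rightarrow> layer list \<Rightarrow> (nat \<Rightarrow> real) \<Rightarrow> (nat \<Rightarrow> real)" where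
  "eval_net \<rho> (n # ns) (l # l' # \<Phi>) x = eval_net \<rho> ns (l' # \<Phi>) (\<lambda>i. \<rho> (aff n l x i))"
| "eval_net \<rho> (n # ns) [l] x = aff n l x"
| "eval_net \<rho> _ _ x = x"

definition realization :: "(real \<Rightarrow> real) \<Rightarrow> nat list \<Rightarrow> layer list
    \<Rightarrow> real^'d::finite \<Rightarrow> real^'m::finite" where
  "realization \<rho> S \<Phi> x =
     (\<chi> k. eval_net \<rho> S \<Phi> (\<lambda>j. if j < CARD('d) then x $ dec j else 0) (enc k))"

definition relu :: "real \<Rightarrow> real" where
  "relu x = max 0 x"

text \<open>RNN^{Omega,C}_rho(S) for S = (d, N_1, ..., N_(L-1), N_L) where d = CARD('d),
  the hidden widths are hs = [N_1,...,N_(L-1)] and N_L = CARD('m).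
  Functions are considered on Omega (restriction is implicit in the norms below).\<close>
definition RNN :: "(real \<Rightarrow> real) \<Rightarrow> nat list \<Rightarrow> real \<Rightarrow> (real^'d::finite \<Rightarrow> real^'m::finite) set" where
  "RNN \<rho> hs C = {realization \<rho> (CARD('d) # hs @ [CARD('m)]) \<Phi> | \<Phi>.
       is_NN (CARD('d) # hs @ [CARD('m)]) \<Phi> \<and>
       scaling_norm (CARD('d) # hs @ [CARD('m)]) \<Phi> \<le> C}"

definition Lp_mem :: "'a measure \<Rightarrow> ennreal \<Rightarrow> ('a \<Rightarrow> 'b::euclidean_space) \<Rightarrow> bool" where
  "Lp_mem \<mu> p f \<longleftrightarrow> f \<in> borel_measurable \<mu> \<and>
     (if p = \<infinity> then esssup \<mu> (\<lambda>x. ereal (norm (f x))) < \<infinity>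
      else integrable \<mu> (\<lambda>x. norm (f x) powr enn2real p))"

definition Lp_norm :: "'a measure \<Rightarrow> ennreal \<Rightarrow> ('a \<Rightarrow> 'b::euclidean_space) \<Rightarrow> real" where
  "Lp_norm \<mu> p f =
     (if p = \<infinity> then real_of_ereal (esssup \<mu> (\<lambda>x. ereal (norm (f x))))
      else (\<integral>x. norm (f x) powr enn2real p \<partial>\<mu>) powr (1 / enn2real p))"

text \<open>F is a subset of L^p(mu) whose image in L^p (classes mod mu-a.e. equality) is closed.\<close>
definition closed_in_Lp :: "'a measure \<Rightarrow> ennreal \<Rightarrow> ('a \<Rightarrow> 'b::euclidean_space) set \<Rightarrow> bool" where
  "closed_in_Lp \<mu> p F \<longleftrightarrow> (\<forall>h\<in>F. Lp_mem \<mu> p h) \<and>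
     (\<forall>f g. Lp_mem \<mu> p f \<and> (\<forall>k. g k \<in> F) \<and>
        (\<lambda>k. Lp_norm \<mu> p (\<lambda>x. g k x - f x)) \<longlonglongrightarrow> 0
        \<longrightarrow> (\<exists>h\<in>F. AE x in \<mu>. f x = h x))"

definition closed_in_C :: "'a::topological_space set \<Rightarrow> ('a \<Rightarrow> 'b::euclidean_space) set \<Rightarrow> bool" where
  "closed_in_C \<Omega> F \<longleftrightarrow> (\<forall>h\<in>F. continuous_on \<Omega> h) \<and>
     (\<forall>f g. continuous_on \<Omega> f \<and> (\<forall>k. g k \<in> F) \<and> uniform_limit \<Omega> g f sequentially
        \<longrightarrow> (\<exists>h\<in>F. \<forall>x\<in>\<Omega>. f x = h x))"

end

theory Submission
  imports Defs
begin


lemma subseq_finite: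
  fixes X :: "nat \<Rightarrow> 'i \<Rightarrow> 'a::topological_space"
  assumes "finite I"
    and H: "\<And>s::nat \<Rightarrow> 'a. (\<forall>k. s k \<in> S) \<Longrightarrow> \<exists>l r. strict_mono r \<and> (s \<circ> r) \<longlonglongrightarrow> l"
    and X: "\<forall>k. \<forall>i\<in>I. X k i \<in> S"
  shows "\<exists>r. strict_mono r \<and> (\<forall>i\<in>I. \<exists>l. (\<lambda>k. X (r k) i) \<longlonglongrightarrow> l)"
  using assms(1) X
proof (induction I rule: finite_induct)
  case empty
  then show ?case by (auto intro: strict_mono_id)
next
  case (insert a I)
  then obtain r where r: "strict_mono r" "\<forall>i\<in>I. \<exists>l. (\<lambda>k. X (r k) i) \<longlonglongrightarrow> l" by auto
  have "\<forall>k. X (r k) a \<in> S" using insert.prems by auto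
  from H[OF this] obtain l r' where r': "strict_mono r'" "((\<lambda>k. X (r k) a) \<circ> r') \<longlonglongrightarrow> l" by auto
  have "strict_mono (r \<circ> r')" using r r' by (simp add: strict_mono_o)
  moreover have "\<forall>i\<in>insert a I. \<exists>l. (\<lambda>k. X ((r \<circ> r') k) i) \<longlonglongrightarrow> l"
  proof
    fix i assume "i \<in> insert a I"
    then show "\<exists>l. (\<lambda>k. X ((r \<circ> r') k) i) \<longlonglongrightarrow> l"
    proof
      assume "i = a" then show ?thesis using r' by (auto simp: o_def)
    next
      assume "i \<in> I"
      then obtain l where "(\<lambda>k. X (r k) i) \<longlonglongrightarrow> l" using r by auto
      from LIMSEQ_subseq_LIMSEQ[OF this r'(1)] show ?thesis by (auto simp: o_def)
    qed
  qed
  ultimately show ?case by blast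
qed

lemma subseq_real:
  fixes s :: "nat \<Rightarrow> real"
  assumes "\<forall>k. s k \<in> {-C..C}"
  shows "\<exists>l r. strict_mono r \<and> (s \<circ> r) \<longlonglongrightarrow> l"
proof -
  have "\<forall>k. \<bar>s k\<bar> \<le> C" using assms by (metis abs_le_iff atLeastAtMost_iff minus_le_iff)
  then have "bounded (range s)"
    by (intro boundedI[where B=C]) auto
  then show ?thesis by (rule bounded_imp_convergent_subsequence)
qed

lemma subseq_ereal:
  fixes s :: "nat \<Rightarrow> ereal"
  assumes "\<forall>k. s k \<in> UNIV"
  shows "\<exists>l r. strict_mono r \<and> (s \<circ> r) \<longlonglongrightarrow> l"
  by (rule compact_complete_linorder)

lemma uniform_limit_sum_fin:
  fixes f :: "'i \<Rightarrow> nat \<Rightarrow> 'a \<Rightarrow> real"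
  assumes "finite I" "\<forall>i\<in>I. uniform_limit X (f i) (g i) F"
  shows "uniform_limit X (\<lambda>k x. \<Sum>i\<in>I. f i k x) (\<lambda>x. \<Sum>i\<in>I. g i x) F"
  using assms
proof (induction I rule: finite_induct)
  case empty
  then show ?case by (simp add: uniform_limit_const)
next
  case (insert a I)
  then show ?case by (simp add: uniform_limit_add)
qed

lemma uniform_limit_lip:
  fixes f :: "nat \<Rightarrow> 'a \<Rightarrow> real"
  assumes "uniform_limit X f g F" "\<And>a b. \<bar>h a - h b\<bar> \<le> \<bar>a - b\<bar>"
  shows "uniform_limit X (\<lambda>k x. h (f k x)) (\<lambda>x. h (g x)) F"
proof (rule uniform_limitI)
  fix e :: real assume "0 < e"
  from uniform_limitD[OF assms(1) this]
  show "\<forall>\<^sub>F n in F. \<forall>x\<in>X. dist (h (f n x)) (h (g x)) < e"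
    proof eventually_elim
    case (elim n)
    show ?case
    proof
      fix x assume "x \<in> X"
      then have "dist (f n x) (g x) < e" using elim by blast
      then show "dist (h (f n x)) (h (g x)) < e"
        using assms(2)[of "f n x" "g x"] by (simp add: dist_real_def)
    qed
  qed
qed

lemma relu_lip: "\<bar>relu a - relu b\<bar> \<le> \<bar>a - b\<bar>"
  by (simp add: relu_def)

lemma aff_cong: "(\<And>j. j < n \<Longrightarrow> x j = y j) \<Longrightarrow> aff n l x = aff n l y"
  unfolding aff_def by (auto intro!: ext sum.cong)

lemma eval_net_Cons2:
  "b \<noteq> [] \<Longrightarrow> eval_net \<rho> (n # ns) (a # b) x = eval_net \<rho> ns b (\<lambda>i. \<rho> (aff n a x i))"
  by (cases b) auto

lemma eval_net_cong:
  assumes "\<Phi> \<noteq> []" "\<And>j. j < n \<Longrightarrow> x j = y j"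
  shows "eval_net \<rho> (n # ns) \<Phi> x = eval_net \<rho> (n # ns) \<Phi> y"
proof (cases \<Phi>)
  case Nil then show ?thesis using assms by simp
next
  case (Cons a b)
  have e: "aff n a x = aff n a y" by (rule aff_cong) (use assms in auto)
  show ?thesis
  proof (cases b)
    case Nil then show ?thesis using Cons e by simp
  next
    case (Cons c d) then show ?thesis using \<open>\<Phi> = a # b\<close> e by simp
  qed
qed

lemma is_NN_Cons:
  "is_NN (n # m # ms) (a # \<Psi>) \<longleftrightarrow>
     (\<forall>i j. (m \<le> i \<or> n \<le> j) \<longrightarrow> fst a i j = 0) \<and> (\<forall>i. m \<le> i \<longrightarrow> snd a i = 0) \<and> is_NN (m # ms) \<Psi>"
proof
  assume H: "is_NN (n # m # ms) (a # \<Psi>)"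
  have L: "length (m # ms) = length \<Psi> + 1" using H by (simp add: is_NN_def)
  have A0: "(\<forall>i j. (m \<le> i \<or> n \<le> j) \<longrightarrow> fst a i j = 0) \<and> (\<forall>i. m \<le> i \<longrightarrow> snd a i = 0)"
    using H unfolding is_NN_def by (metis One_nat_def add_0 length_Cons nth_Cons_0 nth_Cons_Suc zero_less_Suc)
  have "\<forall>l < length \<Psi>.
        (\<forall>i j. ((m # ms) ! (l+1) \<le> i \<or> (m # ms) ! l \<le> j) \<longrightarrow> fst (\<Psi> ! l) i j = 0) \<and>
        (\<forall>i. (m # ms) ! (l+1) \<le> i \<longrightarrow> snd (\<Psi> ! l) i = 0)"
  proof (intro allI impI)
    fix l assume "l < length \<Psi>"
    then have "Suc l < length (a # \<Psi>)" by simp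
    with H show "(\<forall>i j. ((m # ms) ! (l+1) \<le> i \<or> (m # ms) ! l \<le> j) \<longrightarrow> fst (\<Psi> ! l) i j = 0) \<and>
        (\<forall>i. (m # ms) ! (l+1) \<le> i \<longrightarrow> snd (\<Psi> ! l) i = 0)"
      unfolding is_NN_def by (metis Suc_eq_plus1 nth_Cons_Suc)
  qed
  with L A0 show "(\<forall>i j. (m \<le> i \<or> n \<le> j) \<longrightarrow> fst a i j = 0) \<and> (\<forall>i. m \<le> i \<longrightarrow> snd a i = 0) \<and> is_NN (m # ms) \<Psi>"
    unfolding is_NN_def by blast
next
  assume H: "(\<forall>i j. (m \<le> i \<or> n \<le> j) \<longrightarrow> fst a i j = 0) \<and> (\<forall>i. m \<le> i \<longrightarrow> snd a i = 0) \<and> is_NN (m # ms) \<Psi>"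
  show "is_NN (n # m # ms) (a # \<Psi>)"
    unfolding is_NN_def
  proof (intro conjI allI impI)
    show "length (n # m # ms) = length (a # \<Psi>) + 1" using H by (simp add: is_NN_def)
  next
    fix l i j assume l: "l < length (a # \<Psi>)" and ij: "(n # m # ms) ! (l + 1) \<le> i \<or> (n # m # ms) ! l \<le> j"
    show "fst ((a # \<Psi>) ! l) i j = 0"
    proof (cases l)
      case 0 then show ?thesis using H ij by auto
    next
      case (Suc l') then show ?thesis using H ij l unfolding is_NN_def by auto
    qed
  next
    fix l i assume l: "l < length (a # \<Psi>)" and ij: "(n # m # ms) ! (l + 1) \<le> i"
    show "snd ((a # \<Psi>) ! l) i = 0"
    proof (cases l)
      case 0 then show ?thesis using H ij by auto
    next
      case (Suc l') then show ?thesis using H ij l unfolding is_NN_def by simp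
    qed
  qed
qed



lemma uniform_limit_const_seq:
  fixes a :: "nat \<Rightarrow> real"
  assumes "a \<longlonglongrightarrow> a0"
  shows "uniform_limit X (\<lambda>k x. a k) (\<lambda>x. a0) sequentially"
proof (rule uniform_limitI)
  fix e :: real assume "0 < e"
  with assms have "\<forall>\<^sub>F k in sequentially. dist (a k) a0 < e" by (rule tendstoD)
  then show "\<forall>\<^sub>F k in sequentially. \<forall>x\<in>X. dist (a k) a0 < e" by eventually_elim auto
qed

lemma uniform_limit_subseq:
  assumes "uniform_limit X f g sequentially" "strict_mono r"
  shows "uniform_limit X (\<lambda>k. f (r k)) g sequentially"
  using filterlim_compose[OF assms(1) filterlim_subseq[OF assms(2)]] by (simp add: o_def)

lemma layer:
  fixes W :: "nat \<Rightarrow> nat \<Rightarrow> nat \<Rightarrow> real" and \<phi>s :: "nat \<Rightarrow> 'a \<Rightarrow> nat \<Rightarrow> real"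
  assumes W: "\<forall>k i j. \<bar>W k i j\<bar> \<le> C" and C: "C \<ge> 0"
    and U: "\<forall>j<n. uniform_limit \<Omega> (\<lambda>k x. \<phi>s k x j) (\<lambda>x. \<phi> x j) sequentially"
    and Bd: "\<forall>j<n. \<exists>B. \<forall>x\<in>\<Omega>. \<bar>\<phi> x j\<bar> \<le> B"
  shows "\<exists>r W'. strict_mono r \<and> (\<forall>i j. \<bar>W' i j\<bar> \<le> C) \<and> (\<forall>i j. (m \<le> i \<or> n \<le> j) \<longrightarrow> W' i j = 0) \<and>
     (\<forall>i<m. uniform_limit \<Omega> (\<lambda>k x. \<Sum>j<n. W (r k) i j * \<phi>s (r k) x j) (\<lambda>x. \<Sum>j<n. W' i j * \<phi> x j) sequentially) \<and>
     (\<forall>i<m. \<exists>B\<ge>0. \<forall>x\<in>\<Omega>. \<bar>\<Sum>j<n. W' i j * \<phi> x j\<bar> \<le> B)"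
proof -
  let ?I = "{..<m} \<times> {..<n}"
  have "\<exists>r. strict_mono r \<and> (\<forall>p\<in>?I. \<exists>l. (\<lambda>k. (\<lambda>k p. W k (fst p) (snd p)) (r k) p) \<longlonglongrightarrow> l)"
  proof (rule subseq_finite[where S="{-C..C}"])
    show "\<exists>l r. strict_mono r \<and> (s \<circ> r) \<longlonglongrightarrow> l" if "\<forall>k. s k \<in> {-C..C}" for s :: "nat \<Rightarrow> real"
      using subseq_real that by blast
    show "\<forall>k. \<forall>p\<in>?I. W k (fst p) (snd p) \<in> {-C..C}"
      using W by (metis abs_le_iff atLeastAtMost_iff minus_le_iff)
  qed simp
  then obtain r where r: "strict_mono r" and rl: "\<forall>p\<in>?I. \<exists>l. (\<lambda>k. W (r k) (fst p) (snd p)) \<longlonglongrightarrow> l"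
    by auto
  from bchoice[OF rl] obtain Wl where Wl: "\<forall>p\<in>?I. (\<lambda>k. W (r k) (fst p) (snd p)) \<longlonglongrightarrow> Wl p" by blast
  define W' where "W' i j = (if i < m \<and> j < n then Wl (i, j) else 0)" for i j
  have conv: "(\<lambda>k. W (r k) i j) \<longlonglongrightarrow> W' i j" if "i < m" "j < n" for i j
    using Wl that unfolding W'_def by force
  have W'C: "\<bar>W' i j\<bar> \<le> C" for i j
  proof (cases "i < m \<and> j < n")
    case True
    have "(\<lambda>k. \<bar>W (r k) i j\<bar>) \<longlonglongrightarrow> \<bar>W' i j\<bar>" using conv True by (intro tendsto_rabs) auto
    then show ?thesis by (rule LIMSEQ_le_const2) (use W in auto)
  next
    case False then show ?thesis using C by (auto simp: W'_def)
  qed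
  from Bd obtain Bf where Bf: "\<forall>j<n. \<forall>x\<in>\<Omega>. \<bar>\<phi> x j\<bar> \<le> Bf j"
    by metis
  have "\<forall>i<m. uniform_limit \<Omega> (\<lambda>k x. \<Sum>j<n. W (r k) i j * \<phi>s (r k) x j) (\<lambda>x. \<Sum>j<n. W' i j * \<phi> x j) sequentially"
  proof (intro allI impI)
    fix i assume i: "i < m"
    show "uniform_limit \<Omega> (\<lambda>k x. \<Sum>j<n. W (r k) i j * \<phi>s (r k) x j) (\<lambda>x. \<Sum>j<n. W' i j * \<phi> x j) sequentially"
    proof (rule uniform_limit_sum_fin[where f="\<lambda>j k x. W (r k) i j * \<phi>s (r k) x j"], simp, intro ballI)
      fix j assume "j \<in> {..<n}"
      then have j: "j < n" by simp
      have bd: "bounded ((\<lambda>x. \<phi> x j) ` \<Omega>)"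
        using Bf j by (intro boundedI[where B="Bf j"]) auto
      show "uniform_limit \<Omega> (\<lambda>k x. W (r k) i j * \<phi>s (r k) x j) (\<lambda>x. W' i j * \<phi> x j) sequentially"
        by (rule uniform_lim_mult[OF uniform_limit_const_seq[OF conv[OF i j]] uniform_limit_subseq[OF _ r] _ bd])
           (use U j in \<open>auto intro: boundedI[where B="\<bar>W' i j\<bar>"]\<close>)
    qed
  qed
  moreover have "\<forall>i<m. \<exists>B\<ge>0. \<forall>x\<in>\<Omega>. \<bar>\<Sum>j<n. W' i j * \<phi> x j\<bar> \<le> B"
  proof (intro allI impI)
    fix i assume i: "i < m"
    have "\<forall>x\<in>\<Omega>. \<bar>\<Sum>j<n. W' i j * \<phi> x j\<bar> \<le> (\<Sum>j<n. C * \<bar>Bf j\<bar>)"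
    proof
      fix x assume x: "x \<in> \<Omega>"
      have "\<bar>\<Sum>j<n. W' i j * \<phi> x j\<bar> \<le> (\<Sum>j<n. \<bar>W' i j * \<phi> x j\<bar>)" by (rule sum_abs)
      also have "\<dots> \<le> (\<Sum>j<n. C * \<bar>Bf j\<bar>)"
      proof (rule sum_mono)
        fix j assume "j \<in> {..<n}"
        then have "\<bar>\<phi> x j\<bar> \<le> \<bar>Bf j\<bar>" using Bf x by force
        then show "\<bar>W' i j * \<phi> x j\<bar> \<le> C * \<bar>Bf j\<bar>"
          unfolding abs_mult using W'C[of i j] C by (intro mult_mono) auto
      qed
      finally show "\<bar>\<Sum>j<n. W' i j * \<phi> x j\<bar> \<le> (\<Sum>j<n. C * \<bar>Bf j\<bar>)" .
    qed
    moreover have "(\<Sum>j<n. C * \<bar>Bf j\<bar>) \<ge> 0" using C by (intro sum_nonneg) auto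
    ultimately show "\<exists>B\<ge>0. \<forall>x\<in>\<Omega>. \<bar>\<Sum>j<n. W' i j * \<phi> x j\<bar> \<le> B" by blast
  qed
  moreover have "\<forall>i j. (m \<le> i \<or> n \<le> j) \<longrightarrow> W' i j = 0" by (auto simp: W'_def)
  ultimately show ?thesis using r W'C by blast
qed



definition good :: "real \<Rightarrow> nat list \<Rightarrow> layer list \<Rightarrow> bool" where
  "good C S \<Phi> \<longleftrightarrow> is_NN S \<Phi> \<and> (\<forall>l\<in>set \<Phi>. \<forall>i j. \<bar>fst l i j\<bar> \<le> C)"

lemma main:
  fixes \<Phi> :: "nat \<Rightarrow> layer list" and \<phi>s :: "nat \<Rightarrow> 'a \<Rightarrow> nat \<Rightarrow> real" and c :: "nat \<Rightarrow> nat \<Rightarrow> real"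
    and \<phi> :: "'a \<Rightarrow> nat \<Rightarrow> real" and \<gamma> :: "nat \<Rightarrow> real"
  assumes "ns \<noteq> []" "\<forall>k. good C (n # ns) (\<Phi> k)" "C \<ge> 0"
   "\<forall>j<n. uniform_limit \<Omega> (\<lambda>k x. \<phi>s k x j) (\<lambda>x. \<phi> x j) sequentially"
   "\<forall>j<n. \<exists>B. \<forall>x\<in>\<Omega>. \<bar>\<phi> x j\<bar> \<le> B"
  shows "\<exists>r \<psi>s e \<psi>. strict_mono r \<and>
   (\<forall>k. \<forall>x\<in>\<Omega>. \<forall>i<last ns. eval_net relu (n#ns) (\<Phi> (r k)) (\<lambda>j. \<phi>s (r k) x j + c (r k) j) i = \<psi>s k x i + e k i) \<and>
   (\<forall>i<last ns. uniform_limit \<Omega> (\<lambda>k x. \<psi>s k x i) (\<lambda>x. \<psi> x i) sequentially) \<and>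
   (\<forall>i<last ns. \<exists>B. \<forall>x\<in>\<Omega>. \<bar>\<psi> x i\<bar> \<le> B) \<and>
   (\<forall>\<epsilon>. \<exists>\<Psi>. good C (n#ns) \<Psi> \<and> (\<forall>x\<in>\<Omega>. \<forall>i<last ns. eval_net relu (n#ns) \<Psi> (\<lambda>j. \<phi> x j + \<gamma> j) i = \<psi> x i + \<epsilon> i))"
  using assms
proof (induction ns arbitrary: n \<Phi> \<phi>s c \<phi> \<gamma>)
  case Nil then show ?case by simp
next
  case (Cons m ms)
  have G: "\<forall>k. good C (n # m # ms) (\<Phi> k)" and C: "C \<ge> 0"
    and U: "\<forall>j<n. uniform_limit \<Omega> (\<lambda>k x. \<phi>s k x j) (\<lambda>x. \<phi> x j) sequentially"
    and Bd: "\<forall>j<n. \<exists>B. \<forall>x\<in>\<Omega>. \<bar>\<phi> x j\<bar> \<le> B" using Cons.prems by auto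
  have len: "length (\<Phi> k) = Suc (length ms)" for k
    using G unfolding good_def is_NN_def by simp
  define W where "W k = fst (\<Phi> k ! 0)" for k
  define b where "b k = snd (\<Phi> k ! 0)" for k
  have WC: "\<forall>k i j. \<bar>W k i j\<bar> \<le> C"
  proof (intro allI)
    fix k i j
    have "\<Phi> k ! 0 \<in> set (\<Phi> k)" using len[of k] by simp
    moreover have "\<forall>l\<in>set (\<Phi> k). \<forall>i j. \<bar>fst l i j\<bar> \<le> C" using G by (simp add: good_def)
    ultimately show "\<bar>W k i j\<bar> \<le> C" unfolding W_def by blast
  qed
  from layer[OF WC C U Bd, of m] obtain r1 W' where r1: "strict_mono r1"
    and W'C: "\<forall>i j. \<bar>W' i j\<bar> \<le> C" and W'0: "\<forall>i j. (m \<le> i \<or> n \<le> j) \<longrightarrow> W' i j = 0"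
    and U1: "\<forall>i<m. uniform_limit \<Omega> (\<lambda>k x. \<Sum>j<n. W (r1 k) i j * \<phi>s (r1 k) x j) (\<lambda>x. \<Sum>j<n. W' i j * \<phi> x j) sequentially"
    and B1: "\<forall>i<m. \<exists>B\<ge>0. \<forall>x\<in>\<Omega>. \<bar>\<Sum>j<n. W' i j * \<phi> x j\<bar> \<le> B"
    by (elim exE conjE) (rule that; assumption)
  define \<psi>0 where "\<psi>0 x i = (\<Sum>j<n. W' i j * \<phi> x j)" for x i
  define \<psi>1 where "\<psi>1 k x i = (\<Sum>j<n. W (r1 k) i j * \<phi>s (r1 k) x j)" for k x i
  define e1 where "e1 k i = (\<Sum>j<n. W (r1 k) i j * c (r1 k) j) + b (r1 k) i" for k i
  have aff_eq: "aff n (\<Phi> (r1 k) ! 0) (\<lambda>j. \<phi>s (r1 k) x j + c (r1 k) j) = (\<lambda>i. \<psi>1 k x i + e1 k i)" for k x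
    by (auto simp: aff_def \<psi>1_def e1_def W_def b_def algebra_simps sum.distrib intro!: ext)
  from B1 obtain B\<psi> where B\<psi>: "\<forall>i<m. B\<psi> i \<ge> 0 \<and> (\<forall>x\<in>\<Omega>. \<bar>\<psi>0 x i\<bar> \<le> B\<psi> i)"
    unfolding \<psi>0_def by metis
  have U1': "\<forall>i<m. uniform_limit \<Omega> (\<lambda>k x. \<psi>1 k x i) (\<lambda>x. \<psi>0 x i) sequentially"
    using U1 unfolding \<psi>1_def \<psi>0_def by simp
  show ?case
  proof (cases "ms = []")
    case True
    have \<Phi>1: "\<Phi> k = [\<Phi> k ! 0]" for k using len[of k] True by (cases "\<Phi> k") auto
    have ev: "eval_net relu [n, m] (\<Phi> k) u = aff n (\<Phi> k ! 0) u" for k u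
      by (subst \<Phi>1) simp
    have "\<forall>\<epsilon>. \<exists>\<Psi>. good C [n, m] \<Psi> \<and> (\<forall>x\<in>\<Omega>. \<forall>i<m. eval_net relu [n, m] \<Psi> (\<lambda>j. \<phi> x j + \<gamma> j) i = \<psi>0 x i + \<epsilon> i)"
    proof
      fix \<epsilon> :: "nat \<Rightarrow> real"
      define b\<epsilon> where "b\<epsilon> i = (if i < m then \<epsilon> i - (\<Sum>j<n. W' i j * \<gamma> j) else 0)" for i
      have "good C [n, m] [(W', b\<epsilon>)]"
        unfolding good_def is_NN_def using W'C W'0 by (auto simp: b\<epsilon>_def)
      moreover have "\<forall>x\<in>\<Omega>. \<forall>i<m. eval_net relu [n, m] [(W', b\<epsilon>)] (\<lambda>j. \<phi> x j + \<gamma> j) i = \<psi>0 x i + \<epsilon> i"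
        by (auto simp: aff_def b\<epsilon>_def \<psi>0_def algebra_simps sum.distrib)
      ultimately show "\<exists>\<Psi>. good C [n, m] \<Psi> \<and> (\<forall>x\<in>\<Omega>. \<forall>i<m. eval_net relu [n, m] \<Psi> (\<lambda>j. \<phi> x j + \<gamma> j) i = \<psi>0 x i + \<epsilon> i)"
        by blast
    qed
    moreover have "\<forall>k. \<forall>x\<in>\<Omega>. \<forall>i<m. eval_net relu [n, m] (\<Phi> (r1 k)) (\<lambda>j. \<phi>s (r1 k) x j + c (r1 k) j) i = \<psi>1 k x i + e1 k i"
      using aff_eq by (simp add: ev)
    moreover have "\<forall>i<m. \<exists>B. \<forall>x\<in>\<Omega>. \<bar>\<psi>0 x i\<bar> \<le> B" using B\<psi> by blast
    ultimately show ?thesis using True r1 U1'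
      by (intro exI[of _ r1] exI[of _ \<psi>1] exI[of _ e1] exI[of _ \<psi>0]) simp
  next
    case False
    have Hsub: "\<exists>r. strict_mono r \<and> (\<forall>i\<in>{..<m}. \<exists>l. (\<lambda>k. (\<lambda>k i. ereal (e1 k i)) (r k) i) \<longlonglongrightarrow> l)"
      by (rule subseq_finite[where S=UNIV]) (auto intro: compact_complete_linorder)
    then obtain r2 where r2: "strict_mono r2" and r2l: "\<forall>i\<in>{..<m}. \<exists>l. (\<lambda>k. ereal (e1 (r2 k) i)) \<longlonglongrightarrow> l"
      by auto
    from bchoice[OF r2l] obtain E where E: "\<forall>i\<in>{..<m}. (\<lambda>k. ereal (e1 (r2 k) i)) \<longlonglongrightarrow> E i" by blast
    define R where "R = r1 \<circ> r2"
    have R: "strict_mono R" unfolding R_def using r1 r2 by (rule strict_mono_o)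
    define \<psi>2 where "\<psi>2 k = \<psi>1 (r2 k)" for k
    define e2 where "e2 k = e1 (r2 k)" for k
    have U2: "\<forall>i<m. uniform_limit \<Omega> (\<lambda>k x. \<psi>2 k x i) (\<lambda>x. \<psi>0 x i) sequentially"
      using U1' uniform_limit_subseq[OF _ r2] unfolding \<psi>2_def by blast
    have E2: "\<forall>i<m. (\<lambda>k. ereal (e2 k i)) \<longlonglongrightarrow> E i" using E unfolding e2_def by simp
    define c' where "c' k i = (if E i = \<infinity> then e2 k i else 0)" for k i
    define \<phi>' where "\<phi>' k x i = relu (\<psi>2 k x i + e2 k i) - c' k i" for k x i
    define \<phi>L where "\<phi>L x i = (if E i = \<infinity> then \<psi>0 x i else if E i = -\<infinity> then 0
        else relu (\<psi>0 x i + real_of_ereal (E i)))" for x i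
    define \<gamma>' where "\<gamma>' i = (if E i = \<infinity> then B\<psi> i else 0)" for i
    have inp: "(\<lambda>i. relu (aff n (\<Phi> (R k) ! 0) (\<lambda>j. \<phi>s (R k) x j + c (R k) j) i)) = (\<lambda>j. \<phi>' k x j + c' k j)" for k x
      using aff_eq[of "r2 k"] by (simp add: R_def \<phi>'_def \<psi>2_def e2_def)
    have U': "\<forall>i<m. uniform_limit \<Omega> (\<lambda>k x. \<phi>' k x i) (\<lambda>x. \<phi>L x i) sequentially"
    proof (intro allI impI)
      fix i assume i: "i < m"
      have Ei: "(\<lambda>k. ereal (e2 k i)) \<longlonglongrightarrow> E i" using E2 i by blast
      have U2i: "uniform_limit \<Omega> (\<lambda>k x. \<psi>2 k x i) (\<lambda>x. \<psi>0 x i) sequentially" using U2 i by blast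
      have Bi: "\<forall>x\<in>\<Omega>. \<bar>\<psi>0 x i\<bar> \<le> B\<psi> i" using B\<psi> i by blast
      consider (P) "E i = \<infinity>" | (M) "E i = -\<infinity>" | (F) a where "E i = ereal a" by (cases "E i") auto
      then show "uniform_limit \<Omega> (\<lambda>k x. \<phi>' k x i) (\<lambda>x. \<phi>L x i) sequentially"
      proof cases
        case P
        have ev1: "\<forall>\<^sub>F k in sequentially. \<forall>x\<in>\<Omega>. dist (\<psi>2 k x i) (\<psi>0 x i) < 1"
          using uniform_limitD[OF U2i, of 1] by simp
        have ev2: "\<forall>\<^sub>F k in sequentially. ereal (B\<psi> i + 1) < ereal (e2 k i)"
          using Ei unfolding P tendsto_PInfty by blast
        have "\<forall>\<^sub>F k in sequentially. \<forall>x\<in>\<Omega>. \<phi>' k x i = \<psi>2 k x i"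
          using ev1 ev2
        proof eventually_elim
          case (elim k)
          show ?case
          proof
            fix x assume x: "x \<in> \<Omega>"
            have "\<bar>\<psi>2 k x i - \<psi>0 x i\<bar> < 1" using elim x by (simp add: dist_real_def)
            moreover have "\<bar>\<psi>0 x i\<bar> \<le> B\<psi> i" using Bi x by blast
            moreover have "B\<psi> i + 1 < e2 k i" using elim by simp
            ultimately have "\<psi>2 k x i + e2 k i \<ge> 0" by linarith
            then show "\<phi>' k x i = \<psi>2 k x i" by (simp add: \<phi>'_def c'_def P relu_def)
          qed
        qed
        moreover have "\<And>x. x \<in> \<Omega> \<Longrightarrow> \<phi>L x i = \<psi>0 x i" by (simp add: \<phi>L_def P)
        ultimately show ?thesis using U2i by (subst uniform_limit_cong) auto
      next
        case M
        have ev1: "\<forall>\<^sub>F k in sequentially. \<forall>x\<in>\<Omega>. dist (\<psi>2 k x i) (\<psi>0 x i) < 1"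
          using uniform_limitD[OF U2i, of 1] by simp
        have ev2: "\<forall>\<^sub>F k in sequentially. ereal (e2 k i) < ereal (- B\<psi> i - 1)"
          using Ei unfolding M tendsto_MInfty by blast
        have "\<forall>\<^sub>F k in sequentially. \<forall>x\<in>\<Omega>. \<phi>' k x i = 0"
          using ev1 ev2
        proof eventually_elim
          case (elim k)
          show ?case
          proof
            fix x assume x: "x \<in> \<Omega>"
            have "\<bar>\<psi>2 k x i - \<psi>0 x i\<bar> < 1" using elim x by (simp add: dist_real_def)
            moreover have "\<bar>\<psi>0 x i\<bar> \<le> B\<psi> i" using Bi x by blast
            moreover have "e2 k i < - B\<psi> i - 1" using elim by simp
            ultimately have "\<psi>2 k x i + e2 k i \<le> 0" by linarith
            then show "\<phi>' k x i = 0" by (simp add: \<phi>'_def c'_def M relu_def)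
          qed
        qed
        moreover have "\<And>x. x \<in> \<Omega> \<Longrightarrow> \<phi>L x i = 0" by (simp add: \<phi>L_def M)
        ultimately show ?thesis by (subst uniform_limit_cong) (auto intro: uniform_limit_const)
      next
        case F
        have "(\<lambda>k. e2 k i) \<longlonglongrightarrow> a" using Ei unfolding F by simp
        then have "uniform_limit \<Omega> (\<lambda>k x. \<psi>2 k x i + e2 k i) (\<lambda>x. \<psi>0 x i + a) sequentially"
          by (intro uniform_limit_add U2i uniform_limit_const_seq)
        then have "uniform_limit \<Omega> (\<lambda>k x. relu (\<psi>2 k x i + e2 k i)) (\<lambda>x. relu (\<psi>0 x i + a)) sequentially"
          by (rule uniform_limit_lip) (rule relu_lip)
        moreover have "\<phi>' k x i = relu (\<psi>2 k x i + e2 k i)" for k x by (simp add: \<phi>'_def c'_def F)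
        moreover have "\<phi>L x i = relu (\<psi>0 x i + a)" for x by (simp add: \<phi>L_def F)
        ultimately show ?thesis by simp
      qed
    qed
    have Bd': "\<forall>j<m. \<exists>B. \<forall>x\<in>\<Omega>. \<bar>\<phi>L x j\<bar> \<le> B"
    proof (intro allI impI)
      fix i assume i: "i < m"
      have Bi: "\<forall>x\<in>\<Omega>. \<bar>\<psi>0 x i\<bar> \<le> B\<psi> i" using B\<psi> i by blast
      have "\<forall>x\<in>\<Omega>. \<bar>\<phi>L x i\<bar> \<le> B\<psi> i + \<bar>real_of_ereal (E i)\<bar>"
      proof
        fix x assume x: "x \<in> \<Omega>"
        have "\<bar>\<psi>0 x i\<bar> \<le> B\<psi> i" using Bi x by blast
        moreover have "B\<psi> i \<ge> 0" using B\<psi> i by blast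
        ultimately show "\<bar>\<phi>L x i\<bar> \<le> B\<psi> i + \<bar>real_of_ereal (E i)\<bar>"
          by (cases "E i") (auto simp: \<phi>L_def relu_def)
      qed
      then show "\<exists>B. \<forall>x\<in>\<Omega>. \<bar>\<phi>L x i\<bar> \<le> B" by blast
    qed
    have good': "\<forall>k. good C (m # ms) (tl (\<Phi> (R k)))"
    proof
      fix k
      have g: "good C (n # m # ms) (\<Phi> (R k))" using G by blast
      have eq: "\<Phi> (R k) = hd (\<Phi> (R k)) # tl (\<Phi> (R k))" using len[of "R k"] by (cases "\<Phi> (R k)") auto
      have "is_NN (m # ms) (tl (\<Phi> (R k)))" using g eq is_NN_Cons unfolding good_def by metis
      moreover have "set (tl (\<Phi> (R k))) \<subseteq> set (\<Phi> (R k))" using eq by (metis set_subset_Cons)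
      ultimately show "good C (m # ms) (tl (\<Phi> (R k)))" using g unfolding good_def by blast
    qed
    from Cons.IH[of m "\<lambda>k. tl (\<Phi> (R k))" \<phi>' \<phi>L c' \<gamma>', OF False good' C U' Bd']
    obtain r3 \<psi>s e \<psi> where r3: "strict_mono r3"
      and IH1: "\<forall>k. \<forall>x\<in>\<Omega>. \<forall>i<last ms. eval_net relu (m#ms) (tl (\<Phi> (R (r3 k)))) (\<lambda>j. \<phi>' (r3 k) x j + c' (r3 k) j) i = \<psi>s k x i + e k i"
      and IH2: "\<forall>i<last ms. uniform_limit \<Omega> (\<lambda>k x. \<psi>s k x i) (\<lambda>x. \<psi> x i) sequentially"
      and IH3: "\<forall>i<last ms. \<exists>B. \<forall>x\<in>\<Omega>. \<bar>\<psi> x i\<bar> \<le> B"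
      and IH4: "\<forall>\<epsilon>. \<exists>\<Psi>. good C (m#ms) \<Psi> \<and> (\<forall>x\<in>\<Omega>. \<forall>i<last ms. eval_net relu (m#ms) \<Psi> (\<lambda>j. \<phi>L x j + \<gamma>' j) i = \<psi> x i + \<epsilon> i)"
      by (elim exE conjE) (rule that; assumption)
    have lastms: "last (m # ms) = last ms" using False by simp
    have A1: "\<forall>k. \<forall>x\<in>\<Omega>. \<forall>i<last ms. eval_net relu (n#m#ms) (\<Phi> ((R \<circ> r3) k)) (\<lambda>j. \<phi>s ((R \<circ> r3) k) x j + c ((R \<circ> r3) k) j) i = \<psi>s k x i + e k i"
    proof (intro allI ballI impI)
      fix k x i assume x: "x \<in> \<Omega>" and i: "i < last ms"
      let ?P = "\<Phi> (R (r3 k))"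
      have eq: "?P = (?P ! 0) # tl ?P" using len[of "R (r3 k)"] by (cases ?P) auto
      have tlne: "tl ?P \<noteq> []" using len[of "R (r3 k)"] False by (cases ?P) auto
      have "eval_net relu (n#m#ms) ?P (\<lambda>j. \<phi>s (R (r3 k)) x j + c (R (r3 k)) j) =
            eval_net relu (m#ms) (tl ?P) (\<lambda>i. relu (aff n (?P ! 0) (\<lambda>j. \<phi>s (R (r3 k)) x j + c (R (r3 k)) j) i))"
        by (subst eq) (rule eval_net_Cons2[OF tlne])
      also have "\<dots> = eval_net relu (m#ms) (tl ?P) (\<lambda>j. \<phi>' (r3 k) x j + c' (r3 k) j)"
        by (simp only: inp)
      finally show "eval_net relu (n#m#ms) (\<Phi> ((R \<circ> r3) k)) (\<lambda>j. \<phi>s ((R \<circ> r3) k) x j + c ((R \<circ> r3) k) j) i = \<psi>s k x i + e k i"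
        using IH1 x i by simp
    qed
    have A4: "\<forall>\<epsilon>. \<exists>\<Psi>. good C (n#m#ms) \<Psi> \<and> (\<forall>x\<in>\<Omega>. \<forall>i<last ms. eval_net relu (n#m#ms) \<Psi> (\<lambda>j. \<phi> x j + \<gamma> j) i = \<psi> x i + \<epsilon> i)"
    proof
      fix \<epsilon> :: "nat \<Rightarrow> real"
      from IH4 obtain \<Psi>' where g': "good C (m#ms) \<Psi>'"
        and ev': "\<forall>x\<in>\<Omega>. \<forall>i<last ms. eval_net relu (m#ms) \<Psi>' (\<lambda>j. \<phi>L x j + \<gamma>' j) i = \<psi> x i + \<epsilon> i"
        by blast
      define b0 where "b0 i = (if i < m then (if E i = \<infinity> then B\<psi> i else if E i = -\<infinity> then - B\<psi> i
          else real_of_ereal (E i)) - (\<Sum>j<n. W' i j * \<gamma> j) else 0)" for i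
      have lenP: "length \<Psi>' = length ms" using g' unfolding good_def is_NN_def by simp
      then have Pne: "\<Psi>' \<noteq> []" using False by auto
      have "good C (n#m#ms) ((W', b0) # \<Psi>')"
        unfolding good_def is_NN_Cons using g' W'C W'0 unfolding good_def by (auto simp: b0_def)
      moreover have "\<forall>x\<in>\<Omega>. \<forall>i<last ms. eval_net relu (n#m#ms) ((W', b0) # \<Psi>') (\<lambda>j. \<phi> x j + \<gamma> j) i = \<psi> x i + \<epsilon> i"
      proof (intro ballI allI impI)
        fix x i assume x: "x \<in> \<Omega>" and i: "i < last ms"
        have lay: "relu (aff n (W', b0) (\<lambda>j. \<phi> x j + \<gamma> j) j) = \<phi>L x j + \<gamma>' j" if j: "j < m" for j
        proof -
          have a: "aff n (W', b0) (\<lambda>j. \<phi> x j + \<gamma> j) j = \<psi>0 x j + (b0 j + (\<Sum>j'<n. W' j j' * \<gamma> j'))"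
            by (simp add: aff_def \<psi>0_def algebra_simps sum.distrib)
          have Bj: "\<bar>\<psi>0 x j\<bar> \<le> B\<psi> j" using B\<psi> j x by blast
          show ?thesis
            using Bj j unfolding a b0_def \<phi>L_def \<gamma>'_def by (auto simp: relu_def)
        qed
        have "eval_net relu (n#m#ms) ((W', b0) # \<Psi>') (\<lambda>j. \<phi> x j + \<gamma> j) =
              eval_net relu (m#ms) \<Psi>' (\<lambda>j. relu (aff n (W', b0) (\<lambda>j. \<phi> x j + \<gamma> j) j))"
          by (rule eval_net_Cons2[OF Pne])
        also have "\<dots> = eval_net relu (m#ms) \<Psi>' (\<lambda>j. \<phi>L x j + \<gamma>' j)"
          by (rule eval_net_cong[OF Pne]) (rule lay)
        finally show "eval_net relu (n#m#ms) ((W', b0) # \<Psi>') (\<lambda>j. \<phi> x j + \<gamma> j) i = \<psi> x i + \<epsilon> i"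
          using ev' x i by simp
      qed
      ultimately show "\<exists>\<Psi>. good C (n#m#ms) \<Psi> \<and> (\<forall>x\<in>\<Omega>. \<forall>i<last ms. eval_net relu (n#m#ms) \<Psi> (\<lambda>j. \<phi> x j + \<gamma> j) i = \<psi> x i + \<epsilon> i)"
        by blast
    qed
    have "strict_mono (R \<circ> r3)" using R r3 by (rule strict_mono_o)
    then show ?thesis unfolding lastms using A1 IH2 IH3 A4
      by (intro exI[of _ "R \<circ> r3"] exI[of _ \<psi>s] exI[of _ e] exI[of _ \<psi>]) (simp add: o_def)
  qed
qed



lemma ereal_le_real: "ereal a \<le> E \<Longrightarrow> E < \<infinity> \<Longrightarrow> a \<le> real_of_ereal E"
  by (cases E) auto

lemma conv_from_norm:
  fixes g :: "nat \<Rightarrow> 'b::real_normed_vector"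
  assumes "\<forall>k. norm (g k - f) \<le> N k" "N \<longlonglongrightarrow> 0"
  shows "g \<longlonglongrightarrow> f"
proof -
  have "(\<lambda>k. norm (g k - f)) \<longlonglongrightarrow> 0"
    by (rule tendsto_sandwich[of "\<lambda>_. 0" _ _ N]) (use assms in auto)
  then have "(\<lambda>k. g k - f) \<longlonglongrightarrow> 0" by (rule tendsto_norm_zero_cancel)
  then show ?thesis by (simp add: Lim_null[symmetric])
qed

lemma Lp_conv_AE:
  fixes f :: "'a \<Rightarrow> 'b::euclidean_space" and g :: "nat \<Rightarrow> 'a \<Rightarrow> 'b"
  assumes fm: "finite_measure \<mu>" and p: "1 \<le> p" and f: "Lp_mem \<mu> p f"
    and gm: "\<forall>k. g k \<in> borel_measurable \<mu>"
    and gb: "\<forall>k. \<exists>B. \<forall>x\<in>space \<mu>. norm (g k x) \<le> B"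
    and lim: "(\<lambda>k. Lp_norm \<mu> p (\<lambda>x. g k x - f x)) \<longlonglongrightarrow> 0"
  shows "\<exists>s. strict_mono s \<and> (AE x in \<mu>. (\<lambda>k. g (s k) x) \<longlonglongrightarrow> f x)"
proof -
  have fmeas[measurable]: "f \<in> borel_measurable \<mu>" using f by (simp add: Lp_mem_def)
  have gm'[measurable]: "g k \<in> borel_measurable \<mu>" for k using gm by blast
  have Gm[measurable]: "(\<lambda>x. g k x - f x) \<in> borel_measurable \<mu>" for k by measurable
  from gb obtain B where B: "\<forall>k. \<forall>x\<in>space \<mu>. norm (g k x) \<le> B k" by metis
  show ?thesis
  proof (cases "p = \<infinity>")
    case True
    define Mf where "Mf = esssup \<mu> (\<lambda>x. ereal (norm (f x)))"
    have Mf: "Mf < \<infinity>" using f True by (simp add: Lp_mem_def Mf_def)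
    have AEf: "AE x in \<mu>. ereal (norm (f x)) \<le> Mf" unfolding Mf_def by (rule esssup_AE)
    define ES where "ES k = esssup \<mu> (\<lambda>x. ereal (norm (g k x - f x)))" for k
    have ESfin: "ES k < \<infinity>" for k
    proof -
      have "AE x in \<mu>. ereal (norm (g k x - f x)) \<le> ereal (B k) + Mf"
        using AEf
      proof (rule AE_mp, intro AE_I2 impI)
        fix x assume x: "x \<in> space \<mu>" and le: "ereal (norm (f x)) \<le> Mf"
        have "norm (g k x) \<le> B k" using B x by blast
        then have "norm (g k x - f x) \<le> B k + norm (f x)"
          using norm_triangle_ineq4[of "g k x" "f x"] by linarith
        then have "ereal (norm (g k x - f x)) \<le> ereal (B k) + ereal (norm (f x))" by simp
        also have "\<dots> \<le> ereal (B k) + Mf" using le by (rule add_left_mono)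
        finally show "ereal (norm (g k x - f x)) \<le> ereal (B k) + Mf" .
      qed
      then have "ES k \<le> ereal (B k) + Mf" unfolding ES_def
        by (intro esssup_I) measurable
      also have "\<dots> < \<infinity>" using Mf by (cases Mf) auto
      finally show ?thesis .
    qed
    have "AE x in \<mu>. \<forall>k. norm (g k x - f x) \<le> Lp_norm \<mu> p (\<lambda>x. g k x - f x)"
    proof (subst AE_all_countable, intro allI)
      fix k
      have "AE x in \<mu>. ereal (norm (g k x - f x)) \<le> ES k" unfolding ES_def by (rule esssup_AE)
      then show "AE x in \<mu>. norm (g k x - f x) \<le> Lp_norm \<mu> p (\<lambda>x. g k x - f x)"
        by eventually_elim (use ESfin True in \<open>auto simp: Lp_norm_def ES_def intro: ereal_le_real\<close>)
    qed
    then have "AE x in \<mu>. (\<lambda>k. g k x) \<longlonglongrightarrow> f x"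
      by eventually_elim (rule conv_from_norm[OF _ lim], auto)
    then show ?thesis by (intro exI[of _ id]) (auto simp: strict_mono_id)
  next
    case False
    define q where "q = enn2real p"
    have q1: "1 \<le> q" unfolding q_def using enn2real_mono[OF p] False by (simp add: top.not_eq_extremum)
    define H where "H k x = norm (g k x - f x) powr q" for k x
    have Hm: "H k \<in> borel_measurable \<mu>" for k unfolding H_def by measurable
    have fint: "integrable \<mu> (\<lambda>x. norm (f x) powr q)" using f False by (simp add: Lp_mem_def q_def)
    have Hint: "integrable \<mu> (H k)" for k
    proof (rule Bochner_Integration.integrable_bound[OF _ Hm])
      define Bk where "Bk = max 0 (B k)"
      show "integrable \<mu> (\<lambda>x. 2 powr q * (Bk powr q + norm (f x) powr q))"
        using fint finite_measure.integrable_const[OF fm] by (intro integrable_mult_right Bochner_Integration.integrable_add) auto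
      show "AE x in \<mu>. norm (H k x) \<le> norm (2 powr q * (Bk powr q + norm (f x) powr q))"
      proof (intro AE_I2)
        fix x assume x: "x \<in> space \<mu>"
        have "norm (g k x) \<le> B k" using B x by blast
        then have "norm (g k x - f x) \<le> 2 * max Bk (norm (f x))"
          using norm_triangle_ineq4[of "g k x" "f x"] unfolding Bk_def by linarith
        then have "H k x \<le> (2 * max Bk (norm (f x))) powr q"
          unfolding H_def using q1 by (intro powr_mono2) auto
        also have "\<dots> = 2 powr q * max Bk (norm (f x)) powr q"
          by (simp add: powr_mult Bk_def)
        also have "\<dots> \<le> 2 powr q * (Bk powr q + norm (f x) powr q)"
          by (intro mult_left_mono) (auto simp: max_def)
        finally show "norm (H k x) \<le> norm (2 powr q * (Bk powr q + norm (f x) powr q))"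
          by (simp add: H_def)
      qed
    qed
    define I where "I k = (\<integral>x. H k x \<partial>\<mu>)" for k
    have Inn: "I k \<ge> 0" for k unfolding I_def H_def by (intro integral_nonneg_AE) auto
    have Lpn: "Lp_norm \<mu> p (\<lambda>x. g k x - f x) = I k powr (1 / q)" for k
      using False by (simp add: Lp_norm_def I_def H_def q_def)
    have Ieq: "I k = Lp_norm \<mu> p (\<lambda>x. g k x - f x) powr q" for k
      using Inn[of k] q1 by (simp add: Lpn powr_powr)
    have "(\<lambda>k. Lp_norm \<mu> p (\<lambda>x. g k x - f x) powr q) \<longlonglongrightarrow> 0"
      using q1 by (intro tendsto_zero_powrI[OF lim]) (auto simp: Lpn)
    moreover have "I = (\<lambda>k. Lp_norm \<mu> p (\<lambda>x. g k x - f x) powr q)" by (rule ext) (rule Ieq)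
    ultimately have I0: "I \<longlonglongrightarrow> 0" by (simp only:)
    have "(\<lambda>k. \<integral>x. norm (H k x) \<partial>\<mu>) \<longlonglongrightarrow> 0"
    proof -
      have "norm (H k x) = H k x" for k x by (simp add: H_def)
      then show ?thesis using I0 unfolding I_def by (simp only:)
    qed
    from tendsto_L1_AE_subseq[OF Hint this] obtain s where s: "strict_mono s"
      and sAE: "AE x in \<mu>. (\<lambda>k. H (s k) x) \<longlonglongrightarrow> 0" by blast
    have "AE x in \<mu>. (\<lambda>k. g (s k) x) \<longlonglongrightarrow> f x"
      using sAE
    proof eventually_elim
      case (elim x)
      have nn: "\<forall>\<^sub>F k in sequentially. 0 \<le> H (s k) x" unfolding H_def by simp
      have "(\<lambda>k. H (s k) x powr (1 / q)) \<longlonglongrightarrow> 0"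
        using q1 by (intro tendsto_zero_powrI[OF elim tendsto_const nn]) simp
      moreover have "H (s k) x powr (1 / q) = norm (g (s k) x - f x)" for k
      proof -
        have "H (s k) x powr (1 / q) = norm (g (s k) x - f x) powr (q * (1 / q))"
          unfolding H_def by (rule powr_powr)
        also have "q * (1 / q) = 1" using q1 by simp
        finally show ?thesis by simp
      qed
      ultimately have T: "(\<lambda>k. norm (g (s k) x - f x)) \<longlonglongrightarrow> 0" by (simp only:)
      show ?case by (rule conv_from_norm[OF _ T]) auto
    qed
    then show ?thesis using s by blast
  qed
qed



lemma enc_lt: "enc (i::'n::finite) < CARD('n)"
proof -
  have "\<exists>e. bij_betw e (UNIV::'n set) {..<CARD('n)}"
    using finite_same_card_bij[of "UNIV::'n set" "{..<CARD('n)}"] by simp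
  then have "bij_betw (enc::'n\<Rightarrow>nat) UNIV {..<CARD('n)}" unfolding enc_def by (rule someI_ex)
  then show ?thesis using bij_betw_apply by fastforce
qed

lemma cont_eval:
  "(\<And>j. continuous_on A (\<lambda>x. u x j)) \<Longrightarrow> continuous_on A (\<lambda>x. eval_net relu S \<Phi> (u x) i)"
proof (induction \<Phi> arbitrary: S u i)
  case Nil
  then show ?case by (cases S) auto
next
  case (Cons l \<Phi>)
  show ?case
  proof (cases S)
    case Nil then show ?thesis using Cons.prems by simp
  next
    case (Cons n ns)
    have ca: "continuous_on A (\<lambda>x. aff n l (u x) i)" for i
      unfolding aff_def using Cons.prems by (intro continuous_intros) auto
    show ?thesis
    proof (cases \<Phi>)
      case Nil then show ?thesis using Cons ca by simp
    next
      case (Cons l' \<Phi>')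
      have "continuous_on A (\<lambda>x. relu (aff n l (u x) i))" for i
        unfolding relu_def by (intro continuous_intros ca)
      then show ?thesis using Cons.IH[of "\<lambda>x i. relu (aff n l (u x) i)"] Cons \<open>S = n # ns\<close> by simp
    qed
  qed
qed

lemma cont_real: "continuous_on UNIV (realization relu S \<Phi> :: real^'d::finite \<Rightarrow> real^'m::finite)"
proof -
  have "continuous_on UNIV (\<lambda>x::real^'d. if j < CARD('d) then x $ dec j else 0)" for j
    by (cases "j < CARD('d)") (auto intro!: continuous_intros)
  then show ?thesis unfolding realization_def
    by (intro continuous_on_vec_lambda cont_eval)
qed

lemma fin_set2: "finite {f i j | i j. i < (a::nat) \<and> j < (b::nat)}"
  by (rule finite_image_set2) auto

lemma RNN_good:
  assumes "h \<in> RNN relu hs C" "C \<ge> 0"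
  shows "\<exists>\<Phi>. h = (realization relu (CARD('d) # hs @ [CARD('m)]) \<Phi> :: real^'d::finite \<Rightarrow> real^'m::finite)
     \<and> good C (CARD('d) # hs @ [CARD('m)]) \<Phi>"
proof -
  let ?S = "CARD('d) # hs @ [CARD('m)]"
  obtain \<Phi> where h: "h = realization relu ?S \<Phi>" and nn: "is_NN ?S \<Phi>" and sc: "scaling_norm ?S \<Phi> \<le> C"
    using assms(1) unfolding RNN_def by blast
  have "\<forall>l\<in>set \<Phi>. \<forall>i j. \<bar>fst l i j\<bar> \<le> C"
  proof (intro ballI allI)
    fix l i j assume "l \<in> set \<Phi>"
    then obtain t where t: "t < length \<Phi>" "l = \<Phi> ! t" by (auto simp: in_set_conv_nth)
    show "\<bar>fst l i j\<bar> \<le> C"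
    proof (cases "i < ?S ! (t+1) \<and> j < ?S ! t")
      case True
      let ?A = "\<Union>l<length \<Phi>. {\<bar>fst (\<Phi> ! l) i j\<bar> | i j. i < ?S ! (l+1) \<and> j < ?S ! l}"
      have fin: "finite ?A" by (intro finite_UN_I) (auto intro: fin_set2)
      have "\<bar>fst l i j\<bar> \<in> ?A" using True t by blast
      then have "\<bar>fst l i j\<bar> \<le> Max ?A" using fin by (rule Max_ge[rotated])
      also have "\<dots> \<le> C" using sc unfolding scaling_norm_def .
      finally show ?thesis .
    next
      case False
      then have "fst l i j = 0" using nn t unfolding is_NN_def by auto
      then show ?thesis using assms(2) by simp
    qed
  qed
  then show ?thesis using h nn unfolding good_def by blast
qed

lemma good_RNN:
  assumes "good C (CARD('d) # hs @ [CARD('m)]) \<Phi>" "\<forall>n\<in>set hs. 0 < n"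
  shows "(realization relu (CARD('d) # hs @ [CARD('m)]) \<Phi> :: real^'d::finite \<Rightarrow> real^'m::finite) \<in> RNN relu hs C"
proof -
  let ?S = "CARD('d) # hs @ [CARD('m)]"
  have nn: "is_NN ?S \<Phi>" and bd: "\<forall>l\<in>set \<Phi>. \<forall>i j. \<bar>fst l i j\<bar> \<le> C" using assms(1) unfolding good_def by auto
  have len: "length \<Phi> = Suc (length hs)" using nn unfolding is_NN_def by simp
  have pos: "\<forall>x\<in>set ?S. 0 < x" using assms(2) by auto
  let ?A = "\<Union>l<length \<Phi>. {\<bar>fst (\<Phi> ! l) i j\<bar> | i j. i < ?S ! (l+1) \<and> j < ?S ! l}"
  have fin: "finite ?A" by (intro finite_UN_I) (auto intro: fin_set2)
  have "?S ! 1 \<in> set ?S" "?S ! 0 \<in> set ?S" by (rule nth_mem, simp)+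
  then have p1: "0 < ?S ! (0+1)" "0 < ?S ! 0" using pos by auto
  have "\<bar>fst (\<Phi> ! 0) 0 0\<bar> \<in> {\<bar>fst (\<Phi> ! 0) i j\<bar> | i j. i < ?S ! (0+1) \<and> j < ?S ! 0}"
    using p1 by blast
  moreover have "0 \<in> {..<length \<Phi>}" using len by simp
  ultimately have "\<bar>fst (\<Phi> ! 0) 0 0\<bar> \<in> ?A" by (rule UN_I[rotated])
  then have ne: "?A \<noteq> {}" by blast
  have le: "a \<le> C" if "a \<in> ?A" for a
  proof -
    from that obtain t i j where t: "t < length \<Phi>" and a: "a = \<bar>fst (\<Phi> ! t) i j\<bar>" by blast
    have "\<Phi> ! t \<in> set \<Phi>" using t by (rule nth_mem)
    then show ?thesis using bd a by blast
  qed
  have "scaling_norm ?S \<Phi> \<le> C" unfolding scaling_norm_def by (rule Max.boundedI[OF fin ne le])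
  then show ?thesis unfolding RNN_def using nn by blast
qed



lemma F3:
  fixes \<Omega> :: "(real^'d::finite) set" and g :: "nat \<Rightarrow> real^'d \<Rightarrow> real^'m::finite"
  assumes hs: "\<forall>n\<in>set hs. 0 < n" and C: "C > 0" and bd: "bounded \<Omega>" and g: "\<forall>k. g k \<in> RNN relu hs C"
  shows "\<exists>r::nat\<Rightarrow>nat. strict_mono r \<and> (\<forall>s x0. strict_mono s \<longrightarrow> x0 \<in> \<Omega> \<longrightarrow> convergent (\<lambda>k. g (r (s k)) x0) \<longrightarrow>
      (\<exists>h\<in>RNN relu hs C. \<forall>x\<in>\<Omega>. (\<lambda>k. g (r (s k)) x) \<longlonglongrightarrow> h x))"
proof -
  let ?S = "CARD('d) # hs @ [CARD('m)]"
  have "\<forall>k. \<exists>\<Phi>. g k = realization relu ?S \<Phi> \<and> good C ?S \<Phi>"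
    using RNN_good[OF _ less_imp_le[OF C]] g by blast
  then obtain \<Phi> where \<Phi>: "\<forall>k. g k = realization relu ?S (\<Phi> k) \<and> good C ?S (\<Phi> k)" by metis
  define inp where "inp x j = (if j < CARD('d) then x $ dec j else (0::real))" for x :: "real^'d" and j
  from bd obtain B where B: "B > 0" "\<forall>x\<in>\<Omega>. norm x \<le> B" by (auto simp: bounded_pos)
  have U: "\<forall>j<CARD('d). uniform_limit \<Omega> (\<lambda>k x. inp x j) (\<lambda>x. inp x j) sequentially"
    by (simp add: uniform_limit_const)
  have Bd: "\<forall>j<CARD('d). \<exists>B. \<forall>x\<in>\<Omega>. \<bar>inp x j\<bar> \<le> B"
  proof (intro allI impI exI ballI)
    fix j x assume "x \<in> \<Omega>"
    then have "norm x \<le> B" using B by blast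
    then show "\<bar>inp x j\<bar> \<le> B" unfolding inp_def using component_le_norm_cart[of x "dec j"] B(1)
      by auto
  qed
  have G: "\<forall>k. good C (CARD('d) # hs @ [CARD('m)]) (\<Phi> k)" using \<Phi> by blast
  from main[where ns="hs @ [CARD('m)]" and n="CARD('d)" and \<Phi>=\<Phi> and \<Omega>=\<Omega> and \<phi>s="\<lambda>k x j. inp x j"
      and \<phi>="\<lambda>x j. inp x j" and c="\<lambda>k j. 0" and \<gamma>="\<lambda>j. 0" and C=C, OF _ G _ U Bd] C
  obtain r \<psi>s e \<psi> where r: "strict_mono r"
    and M1: "\<forall>k. \<forall>x\<in>\<Omega>. \<forall>i<CARD('m). eval_net relu ?S (\<Phi> (r k)) (\<lambda>j. inp x j + 0) i = \<psi>s k x i + e k i"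
    and M2: "\<forall>i<CARD('m). uniform_limit \<Omega> (\<lambda>k x. \<psi>s k x i) (\<lambda>x. \<psi> x i) sequentially"
    and M4: "\<forall>\<epsilon>. \<exists>\<Psi>. good C ?S \<Psi> \<and> (\<forall>x\<in>\<Omega>. \<forall>i<CARD('m). eval_net relu ?S \<Psi> (\<lambda>j. inp x j + 0) i = \<psi> x i + \<epsilon> i)"
    by (auto elim!: exE conjE)
  have inp_eq: "(\<lambda>j. inp x j + 0) = (\<lambda>j. if j < CARD('d) then x $ dec j else 0)" for x
    by (simp add: inp_def)
  have geq: "g (r k) x $ i = \<psi>s k x (enc i) + e k (enc i)" if "x \<in> \<Omega>" for k x i
  proof -
    have "g (r k) x $ i = eval_net relu ?S (\<Phi> (r k)) (\<lambda>j. inp x j + 0) (enc i)"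
      using \<Phi> by (simp add: realization_def inp_def)
    also have "\<dots> = \<psi>s k x (enc i) + e k (enc i)" using M1 that enc_lt[of i] by blast
    finally show ?thesis .
  qed
  have "\<forall>s x0. strict_mono s \<longrightarrow> x0 \<in> \<Omega> \<longrightarrow> convergent (\<lambda>k. g (r (s k)) x0) \<longrightarrow>
      (\<exists>h\<in>RNN relu hs C. \<forall>x\<in>\<Omega>. (\<lambda>k. g (r (s k)) x) \<longlonglongrightarrow> h x)"
  proof (intro allI impI)
    fix s x0 assume s: "strict_mono s" and x0: "x0 \<in> \<Omega>" and cv: "convergent (\<lambda>k. g (r (s k)) x0)"
    then obtain L where L: "(\<lambda>k. g (r (s k)) x0) \<longlonglongrightarrow> L" by (auto simp: convergent_def)
    have \<psi>conv: "(\<lambda>k. \<psi>s (s k) x (enc i)) \<longlonglongrightarrow> \<psi> x (enc i)" if "x \<in> \<Omega>" for x and i :: 'm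
    proof -
      have "(\<lambda>k. \<psi>s k x (enc i)) \<longlonglongrightarrow> \<psi> x (enc i)"
        using tendsto_uniform_limitI[OF M2[rule_format, OF enc_lt[of i]] that] by simp
      from LIMSEQ_subseq_LIMSEQ[OF this s] show ?thesis by (simp add: o_def)
    qed
    define \<epsilon> where "\<epsilon> j = lim (\<lambda>k. e (s k) j)" for j
    have econv: "(\<lambda>k. e (s k) (enc i)) \<longlonglongrightarrow> \<epsilon> (enc i)" for i :: 'm
    proof -
      have "(\<lambda>k. g (r (s k)) x0 $ i - \<psi>s (s k) x0 (enc i)) \<longlonglongrightarrow> L $ i - \<psi> x0 (enc i)"
        by (intro tendsto_diff tendsto_vec_nth L \<psi>conv x0)
      moreover have "g (r (s k)) x0 $ i - \<psi>s (s k) x0 (enc i) = e (s k) (enc i)" for k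
        using geq[OF x0] by simp
      ultimately have "(\<lambda>k. e (s k) (enc i)) \<longlonglongrightarrow> L $ i - \<psi> x0 (enc i)" by simp
      then show ?thesis unfolding \<epsilon>_def using limI by metis
    qed
    from M4 obtain \<Psi> where \<Psi>: "good C ?S \<Psi>"
      and \<Psi>e: "\<forall>x\<in>\<Omega>. \<forall>i<CARD('m). eval_net relu ?S \<Psi> (\<lambda>j. inp x j + 0) i = \<psi> x i + \<epsilon> i" by blast
    define h where "h = (realization relu ?S \<Psi> :: real^'d \<Rightarrow> real^'m)"
    have hin: "h \<in> RNN relu hs C" unfolding h_def using good_RNN[OF \<Psi> hs] .
    have "\<forall>x\<in>\<Omega>. (\<lambda>k. g (r (s k)) x) \<longlonglongrightarrow> h x"
    proof
      fix x assume x: "x \<in> \<Omega>"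
      show "(\<lambda>k. g (r (s k)) x) \<longlonglongrightarrow> h x"
      proof (rule vec_tendstoI)
        fix i
        have "h x $ i = \<psi> x (enc i) + \<epsilon> (enc i)"
          using \<Psi>e x enc_lt[of i] unfolding h_def by (simp add: realization_def inp_def)
        moreover have "(\<lambda>k. \<psi>s (s k) x (enc i) + e (s k) (enc i)) \<longlonglongrightarrow> \<psi> x (enc i) + \<epsilon> (enc i)"
          by (intro tendsto_add \<psi>conv x econv)
        ultimately show "(\<lambda>k. g (r (s k)) x $ i) \<longlonglongrightarrow> h x $ i" using geq[OF x] by simp
      qed
    qed
    then show "\<exists>h\<in>RNN relu hs C. \<forall>x\<in>\<Omega>. (\<lambda>k. g (r (s k)) x) \<longlonglongrightarrow> h x" using hin by blast
  qed
  note X = this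
  show ?thesis
    apply (rule exI[where x=r])
    apply (rule conjI)
     apply (rule r)
    apply (rule X)
    done
qed



theorem proposition3p7:
  fixes hs :: "nat list" and C :: real and \<Omega> :: "(real^'d::finite) set"
  assumes "\<forall>n\<in>set hs. 0 < n"
    and "C > 0"
    and "\<Omega> \<in> sets borel"
    and "bounded \<Omega>"
  shows "(\<forall>(\<mu>::(real^'d) measure) (p::ennreal).
            finite_measure \<mu> \<and> sets \<mu> = sets (restrict_space borel \<Omega>) \<and> 1 \<le> p
            \<longrightarrow> closed_in_Lp \<mu> p (RNN relu hs C :: (real^'d \<Rightarrow> real^'m::finite) set))
       \<and> (compact \<Omega> \<longrightarrow> closed_in_C \<Omega> (RNN relu hs C :: (real^'d \<Rightarrow> real^'m) set))"
proof -
  let ?F = "RNN relu hs C :: (real^'d \<Rightarrow> real^'m) set"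
  have cont: "\<forall>h\<in>?F. continuous_on UNIV h"
    unfolding RNN_def using cont_real by blast
  have bnd: "\<forall>h\<in>?F. \<exists>B. \<forall>x\<in>\<Omega>. norm (h x) \<le> B"
  proof
    fix h assume "h \<in> ?F"
    then have "continuous_on (closure \<Omega>) h" using cont continuous_on_subset by blast
    then have "compact (h ` closure \<Omega>)" using compact_closure assms(4) compact_continuous_image by blast
    then have "bounded (h ` closure \<Omega>)" by (rule compact_imp_bounded)
    then obtain B where "\<forall>y\<in>h ` closure \<Omega>. norm y \<le> B" by (auto simp: bounded_iff)
    then show "\<exists>B. \<forall>x\<in>\<Omega>. norm (h x) \<le> B" using closure_subset by blast
  qed
  have part1: "\<forall>(\<mu>::(real^'d) measure) (p::ennreal).
            finite_measure \<mu> \<and> sets \<mu> = sets (restrict_space borel \<Omega>) \<and> 1 \<le> p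
            \<longrightarrow> closed_in_Lp \<mu> p ?F"
  proof (intro allI impI)
    fix \<mu> :: "(real^'d) measure" and p :: ennreal
    assume A: "finite_measure \<mu> \<and> sets \<mu> = sets (restrict_space borel \<Omega>) \<and> 1 \<le> p"
    then have fm: "finite_measure \<mu>" and sets: "sets \<mu> = sets (restrict_space borel \<Omega>)" and p: "1 \<le> p"
      by auto
    have sp: "space \<mu> = \<Omega>" using sets_eq_imp_space_eq[OF sets] by (simp add: space_restrict_space)
    have meas: "h \<in> borel_measurable \<mu>" if "continuous_on UNIV h" for h :: "real^'d \<Rightarrow> real^'m"
    proof -
      have "h \<in> borel_measurable borel" using that by (rule borel_measurable_continuous_onI)
      then have "h \<in> borel_measurable (restrict_space borel \<Omega>)" by (rule measurable_restrict_space1)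
      then show ?thesis using measurable_cong_sets[OF sets refl, of "borel :: (real^'m) measure"] by (simp only:)
    qed
    have mem: "\<forall>h\<in>?F. Lp_mem \<mu> p h"
    proof
      fix h assume h: "h \<in> ?F"
      have hm[measurable]: "h \<in> borel_measurable \<mu>" using meas cont h by blast
      obtain B where B: "\<forall>x\<in>space \<mu>. norm (h x) \<le> B" using bnd h sp by metis
      show "Lp_mem \<mu> p h"
      proof (cases "p = \<infinity>")
        case True
        have "AE x in \<mu>. ereal (norm (h x)) \<le> ereal B" using B by (intro AE_I2) auto
        then have "esssup \<mu> (\<lambda>x. ereal (norm (h x))) \<le> ereal B"
          by (intro esssup_I) measurable
        then have "esssup \<mu> (\<lambda>x. ereal (norm (h x))) < \<infinity>" by (rule le_less_trans) simp
        then show ?thesis using True hm by (auto simp: Lp_mem_def)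
      next
        case False
        have "integrable \<mu> (\<lambda>x. norm (h x) powr enn2real p)"
        proof (rule finite_measure.integrable_const_bound[OF fm, where B="max 0 B powr enn2real p"])
          show "AE x in \<mu>. norm (norm (h x) powr enn2real p) \<le> max 0 B powr enn2real p"
          proof (intro AE_I2)
            fix x assume "x \<in> space \<mu>"
            then have "norm (h x) \<le> max 0 B" using B by force
            then show "norm (norm (h x) powr enn2real p) \<le> max 0 B powr enn2real p"
              by (simp add: powr_mono2)
          qed
          show "(\<lambda>x. norm (h x) powr enn2real p) \<in> borel_measurable \<mu>" by measurable
        qed
        then show ?thesis using False hm by (simp add: Lp_mem_def)
      qed
    qed
    show "closed_in_Lp \<mu> p ?F"
      unfolding closed_in_Lp_def
    proof (intro conjI allI impI)
      show "\<forall>h\<in>?F. Lp_mem \<mu> p h" by (rule mem)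
    next
      fix f g
      assume H: "Lp_mem \<mu> p f \<and> (\<forall>k. g k \<in> ?F) \<and> (\<lambda>k. Lp_norm \<mu> p (\<lambda>x. g k x - f x)) \<longlonglongrightarrow> 0"
      then have f: "Lp_mem \<mu> p f" and g: "\<forall>k. g k \<in> ?F"
        and lim: "(\<lambda>k. Lp_norm \<mu> p (\<lambda>x. g k x - f x)) \<longlonglongrightarrow> 0" by auto
      from F3[OF assms(1) assms(2) assms(4) g] obtain r :: "nat \<Rightarrow> nat" where r: "strict_mono r"
        and R: "\<forall>s x0. strict_mono s \<longrightarrow> x0 \<in> \<Omega> \<longrightarrow> convergent (\<lambda>k. g (r (s k)) x0) \<longrightarrow>
           (\<exists>h\<in>?F. \<forall>x\<in>\<Omega>. (\<lambda>k. g (r (s k)) x) \<longlonglongrightarrow> h x)" by blast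
      show "\<exists>h\<in>?F. AE x in \<mu>. f x = h x"
      proof (cases "emeasure \<mu> (space \<mu>) = 0")
        case True
        have "space \<mu> \<in> null_sets \<mu>" using True by (auto intro: null_setsI)
        then have "AE x in \<mu>. f x = g 0 x" by (rule AE_I') auto
        then show ?thesis using g by blast
      next
        case False
        have gm: "\<forall>k. g (r k) \<in> borel_measurable \<mu>" using meas cont g by blast
        have gb: "\<forall>k. \<exists>B. \<forall>x\<in>space \<mu>. norm (g (r k) x) \<le> B" using bnd g sp by blast
        have lim': "(\<lambda>k. Lp_norm \<mu> p (\<lambda>x. g (r k) x - f x)) \<longlonglongrightarrow> 0"
          using LIMSEQ_subseq_LIMSEQ[OF lim r] by (simp add: o_def)
        from Lp_conv_AE[OF fm p f gm gb lim'] obtain s where s: "strict_mono s"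
          and sAE: "AE x in \<mu>. (\<lambda>k. g (r (s k)) x) \<longlonglongrightarrow> f x" by blast
        have "\<not> (\<forall>x\<in>space \<mu>. \<not> (\<lambda>k. g (r (s k)) x) \<longlonglongrightarrow> f x)"
        proof
          assume N: "\<forall>x\<in>space \<mu>. \<not> (\<lambda>k. g (r (s k)) x) \<longlonglongrightarrow> f x"
          have "AE x in \<mu>. False" using sAE
          proof (rule AE_mp)
            show "AE x in \<mu>. (\<lambda>k. g (r (s k)) x) \<longlonglongrightarrow> f x \<longrightarrow> False" using N by (intro AE_I2) blast
          qed
          then have "ae_filter \<mu> = bot" by (simp add: eventually_False)
          then show False using False ae_filter_eq_bot_iff by blast
        qed
        then obtain x0 where x0: "x0 \<in> space \<mu>" "(\<lambda>k. g (r (s k)) x0) \<longlonglongrightarrow> f x0" by blast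
        then have "convergent (\<lambda>k. g (r (s k)) x0)" by (auto simp: convergent_def)
        with R s x0(1) sp obtain h where h: "h \<in> ?F" and hx: "\<forall>x\<in>\<Omega>. (\<lambda>k. g (r (s k)) x) \<longlonglongrightarrow> h x"
          by blast
        have "AE x in \<mu>. f x = h x"
          using sAE AE_space
        proof eventually_elim
          case (elim x)
          then show ?case using hx sp LIMSEQ_unique by metis
        qed
        then show ?thesis using h by blast
      qed
    qed
  qed
  have part2: "compact \<Omega> \<longrightarrow> closed_in_C \<Omega> ?F"
  proof
    assume cpt: "compact \<Omega>"
    show "closed_in_C \<Omega> ?F" unfolding closed_in_C_def
    proof (intro conjI allI impI)
      show "\<forall>h\<in>?F. continuous_on \<Omega> h" using cont continuous_on_subset by blast
    next
      fix f g
      assume H: "continuous_on \<Omega> f \<and> (\<forall>k. g k \<in> ?F) \<and> uniform_limit \<Omega> g f sequentially"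
      then have g: "\<forall>k. g k \<in> ?F" and ul: "uniform_limit \<Omega> g f sequentially" by auto
      from F3[OF assms(1) assms(2) assms(4) g] obtain r :: "nat \<Rightarrow> nat" where r: "strict_mono r"
        and R: "\<forall>s x0. strict_mono s \<longrightarrow> x0 \<in> \<Omega> \<longrightarrow> convergent (\<lambda>k. g (r (s k)) x0) \<longrightarrow>
           (\<exists>h\<in>?F. \<forall>x\<in>\<Omega>. (\<lambda>k. g (r (s k)) x) \<longlonglongrightarrow> h x)" by blast
      show "\<exists>h\<in>?F. \<forall>x\<in>\<Omega>. f x = h x"
      proof (cases "\<Omega> = {}")
        case True then show ?thesis using g by blast
      next
        case False
        then obtain x0 where x0: "x0 \<in> \<Omega>" by blast
        have pt: "(\<lambda>k. g (r (id k)) x) \<longlonglongrightarrow> f x" if "x \<in> \<Omega>" for x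
        proof -
          have "(\<lambda>k. g k x) \<longlonglongrightarrow> f x" using tendsto_uniform_limitI[OF ul that] .
          from LIMSEQ_subseq_LIMSEQ[OF this r] show ?thesis by (simp add: o_def)
        qed
        have "convergent (\<lambda>k. g (r (id k)) x0)" using pt[OF x0] by (auto simp: convergent_def)
        with R strict_mono_id x0 obtain h where h: "h \<in> ?F"
          and hx: "\<forall>x\<in>\<Omega>. (\<lambda>k. g (r (id k)) x) \<longlonglongrightarrow> h x" by blast
        have "\<forall>x\<in>\<Omega>. f x = h x" using pt hx LIMSEQ_unique by blast
        then show ?thesis using h by blast
      qed
    qed
  qed
  show ?thesis using part1 part2 by blast
qed

end
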